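(* Suppose that $\mathcal{L}$ satisfies the join-meet distributivity law and $\otimes$ is continuous. Let $\Phi=(\varphi_n)_{n\in\mathbb{N}}$ be a depth-bounded fuzzy bisimulation between image-finite fuzzy automata $\mathcal{A}$ and $\mathcal{A}'$. Then $\varphi=\bigwedge_{n\in\mathbb{N}}\varphi_n$ is a fuzzy bisimulation between $\mathcal{A}$ and $\mathcal{A}'$ and $\|\varphi\|^b_{\mathcal{A},\mathcal{A}'}=\|\Phi\|^b_{\mathcal{A},\mathcal{A}'}$.
   Context: $\mathcal{L}=\langle L,\le,\otimes,\Rightarrow,0,1\rangle$ is a complete residuated lattice: $\langle L,\le,0,1\rangle$ is a complete lattice with least element $0$ and greatest element $1$, $\langle L,\otimes,1\rangle$ is a commutative monoid, and $x\otimes y\le z$ iff $x\le (y\Rightarrow z)$. Join-meet distributivity law: $a\vee\bigwedge B=\bigwedge_{b\in B}(a\vee b)$ for all $a,B$. $\otimes$ continuous: $x\otimes\bigwedge Y=\bigwedge_{y\in Y}(x\otimes y)$. Fuzzy sets/relations are maps into $L$ ordered pointwise (infima pointwise); $\varphi^{-1}(b,a)=\varphi(a,b)$; $(\varphi\circ\psi)(a,c)=\bigvee_b\varphi(a,b)\otimes\psi(b,c)$, $(f\circ\varphi)(b)=\bigvee_a f(a)\otimes\varphi(a,b)$, $(\varphi\circ g)(a)=\bigvee_b\varphi(a,b)\otimes g(b)$; $S(g,f)=\bigwedge_a(g(a)\Rightarrow f(a))$. A fuzzy automaton over $\Sigma$ is $\mathcal{A}=\langle A,\delta^{\mathcal{A}},\sigma^{\mathcal{A}},\tau^{\mathcal{A}}\rangle$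 with $A$ nonempty, $\delta^{\mathcal{A}}:A\times\Sigma\times A\to L$, $\sigma^{\mathcal{A}},\tau^{\mathcal{A}}:A\to L$; $\delta^{\mathcal{A}}_s(x,y)=\delta^{\mathcal{A}}(x,s,y)$; similarly $\mathcal{A}'$ with states $A'$. Image-finite: each $\{y\mid\delta_s(x,y)>0\}$ finite and the initial fuzzy set has finite support. $\|\varphi\|_{\mathcal{A},\mathcal{A}'}=S(\sigma^{\mathcal{A}},\sigma^{\mathcal{A}'}\circ\varphi^{-1})$, and for $\varphi:A\times A'\to L$, $\|\varphi\|^b_{\mathcal{A},\mathcal{A}'}=\|\varphi\|_{\mathcal{A},\mathcal{A}'}\wedge\|\varphi^{-1}\|_{\mathcal{A}',\mathcal{A}}$. A fuzzy bisimulation between $\mathcal{A}$ and $\mathcal{A}'$ is $\varphi:A\times A'\to L$ with $\varphi^{-1}\circ\tau^{\mathcal{A}}\le\tau^{\mathcal{A}'}$, $\varphi\circ\tau^{\mathcal{A}'}\le\tau^{\mathcal{A}}$, and $\varphi^{-1}\circ\delta^{\mathcal{A}}_s\le\delta^{\mathcal{A}'}_s\circ\varphi^{-1}$, $\varphi\circ\delta^{\mathcal{A}'}_s\le\delta^{\mathcal{A}}_s\circ\varphi$ for all $s\in\Sigma$. A depth-bounded fuzzy bisimulation between $\mathcal{A}$ and $\mathcal{A}'$ is a sequence $(\varphi_n)_{n\in\mathbb{N}}$ of fuzzy relations $A\times A'\to L$ with $\varphi_n\le\varphi_{n-1}$ ($n\ge1$), $\varphi_0^{-1}\circ\tau^{\mathcal{A}}\le\tau^{\mathcal{A}'}$,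 $\varphi_0\circ\tau^{\mathcal{A}'}\le\tau^{\mathcal{A}}$, and for all $s\in\Sigma,n\ge1$: $\varphi_n^{-1}\circ\delta^{\mathcal{A}}_s\le\delta^{\mathcal{A}'}_s\circ\varphi_{n-1}^{-1}$ and $\varphi_n\circ\delta^{\mathcal{A}'}_s\le\delta^{\mathcal{A}}_s\circ\varphi_{n-1}$. Its norm is $\|\Phi\|^b_{\mathcal{A},\mathcal{A}'}=\bigwedge_n\|\varphi_n\|_{\mathcal{A},\mathcal{A}'}\wedge\bigwedge_n\|\varphi_n^{-1}\|_{\mathcal{A}',\mathcal{A}}$. *)

theory Defs
  imports Main
begin

text \<open>Truth values: a type 'l of class complete_lattice (0 = bot, 1 = top), with
  multiplication otimes and residuum res given as parameters.\<close>

definition complete_residuated_lattice ::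
  "('l::complete_lattice \<Rightarrow> 'l \<Rightarrow> 'l) \<Rightarrow> ('l \<Rightarrow> 'l \<Rightarrow> 'l) \<Rightarrow> bool" where
  "complete_residuated_lattice otimes res \<longleftrightarrow>
     (\<forall>x y z. otimes (otimes x y) z = otimes x (otimes y z)) \<and>
     (\<forall>x y. otimes x y = otimes y x) \<and>
     (\<forall>x. otimes x top = x) \<and>
     (\<forall>x y z. otimes x y \<le> z \<longleftrightarrow> x \<le> res y z)"

definition join_meet_distributive :: "'l::complete_lattice itself \<Rightarrow> bool" where
  "join_meet_distributive _ \<longleftrightarrow> (\<forall>(a::'l) B. sup a (Inf B) = (INF b\<in>B. sup a b))"

definition otimes_continuous :: "('l::complete_lattice \<Rightarrow> 'l \<Rightarrow> 'l) \<Rightarrow> bool" where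
  "otimes_continuous otimes \<longleftrightarrow> (\<forall>x Y. Y \<noteq> {} \<longrightarrow> otimes x (Inf Y) = (INF y\<in>Y. otimes x y))"

definition fconv :: "('a \<Rightarrow> 'b \<Rightarrow> 'l) \<Rightarrow> 'b \<Rightarrow> 'a \<Rightarrow> 'l" where
  "fconv \<phi> = (\<lambda>b a. \<phi> a b)"

definition rel_comp :: "('l::complete_lattice \<Rightarrow> 'l \<Rightarrow> 'l) \<Rightarrow>
    ('a \<Rightarrow> 'b \<Rightarrow> 'l) \<Rightarrow> ('b \<Rightarrow> 'c \<Rightarrow> 'l) \<Rightarrow> 'a \<Rightarrow> 'c \<Rightarrow> 'l" where
  "rel_comp otimes \<phi> \<psi> = (\<lambda>a c. SUP b. otimes (\<phi> a b) (\<psi> b c))"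

definition set_rel_comp :: "('l::complete_lattice \<Rightarrow> 'l \<Rightarrow> 'l) \<Rightarrow>
    ('a \<Rightarrow> 'l) \<Rightarrow> ('a \<Rightarrow> 'b \<Rightarrow> 'l) \<Rightarrow> 'b \<Rightarrow> 'l" where
  "set_rel_comp otimes f \<phi> = (\<lambda>b. SUP a. otimes (f a) (\<phi> a b))"

definition rel_set_comp :: "('l::complete_lattice \<Rightarrow> 'l \<Rightarrow> 'l) \<Rightarrow>
    ('a \<Rightarrow> 'b \<Rightarrow> 'l) \<Rightarrow> ('b \<Rightarrow> 'l) \<Rightarrow> 'a \<Rightarrow> 'l" where
  "rel_set_comp otimes \<phi> g = (\<lambda>a. SUP b. otimes (\<phi> a b) (g b))"

definition subsethood :: "('l::complete_lattice \<Rightarrow> 'l \<Rightarrow> 'l) \<Rightarrow> ('a \<Rightarrow> 'l) \<Rightarrow> ('a \<Rightarrow> 'l) \<Rightarrow> 'l" where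
  "subsethood res g f = (INF a. res (g a) (f a))"

text \<open>A fuzzy automaton is given by delta :: 'a => 's => 'a => 'l, sigma, tau :: 'a => 'l
  (state set = type 'a, automatically nonempty).\<close>

definition image_finite :: "('a \<Rightarrow> 's \<Rightarrow> 'a \<Rightarrow> 'l::complete_lattice) \<Rightarrow> ('a \<Rightarrow> 'l) \<Rightarrow> bool" where
  "image_finite \<delta> \<sigma> \<longleftrightarrow> (\<forall>x s. finite {y. \<delta> x s y \<noteq> bot}) \<and> finite {x. \<sigma> x \<noteq> bot}"

definition fnorm :: "('l::complete_lattice \<Rightarrow> 'l \<Rightarrow> 'l) \<Rightarrow> ('l \<Rightarrow> 'l \<Rightarrow> 'l) \<Rightarrow>
    ('a \<Rightarrow> 'l) \<Rightarrow> ('b \<Rightarrow> 'l) \<Rightarrow> ('a \<Rightarrow> 'b \<Rightarrow> 'l) \<Rightarrow> 'l" where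
  "fnorm otimes res \<sigma> \<sigma>' \<phi> = subsethood res \<sigma> (set_rel_comp otimes \<sigma>' (fconv \<phi>))"

definition fnorm_b :: "('l::complete_lattice \<Rightarrow> 'l \<Rightarrow> 'l) \<Rightarrow> ('l \<Rightarrow> 'l \<Rightarrow> 'l) \<Rightarrow>
    ('a \<Rightarrow> 'l) \<Rightarrow> ('b \<Rightarrow> 'l) \<Rightarrow> ('a \<Rightarrow> 'b \<Rightarrow> 'l) \<Rightarrow> 'l" where
  "fnorm_b otimes res \<sigma> \<sigma>' \<phi> = inf (fnorm otimes res \<sigma> \<sigma>' \<phi>) (fnorm otimes res \<sigma>' \<sigma> (fconv \<phi>))"

definition fuzzy_bisim :: "('l::complete_lattice \<Rightarrow> 'l \<Rightarrow> 'l) \<Rightarrow>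
    ('a \<Rightarrow> 's \<Rightarrow> 'a \<Rightarrow> 'l) \<Rightarrow> ('a \<Rightarrow> 'l) \<Rightarrow>
    ('b \<Rightarrow> 's \<Rightarrow> 'b \<Rightarrow> 'l) \<Rightarrow> ('b \<Rightarrow> 'l) \<Rightarrow> ('a \<Rightarrow> 'b \<Rightarrow> 'l) \<Rightarrow> bool" where
  "fuzzy_bisim otimes \<delta> \<tau> \<delta>' \<tau>' \<phi> \<longleftrightarrow>
     rel_set_comp otimes (fconv \<phi>) \<tau> \<le> \<tau>' \<and>
     rel_set_comp otimes \<phi> \<tau>' \<le> \<tau> \<and>
     (\<forall>s. rel_comp otimes (fconv \<phi>) (\<lambda>x y. \<delta> x s y) \<le> rel_comp otimes (\<lambda>x y. \<delta>' x s y) (fconv \<phi>)) \<and>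
     (\<forall>s. rel_comp otimes \<phi> (\<lambda>x y. \<delta>' x s y) \<le> rel_comp otimes (\<lambda>x y. \<delta> x s y) \<phi>)"

definition depth_bounded_fuzzy_bisim :: "('l::complete_lattice \<Rightarrow> 'l \<Rightarrow> 'l) \<Rightarrow>
    ('a \<Rightarrow> 's \<Rightarrow> 'a \<Rightarrow> 'l) \<Rightarrow> ('a \<Rightarrow> 'l) \<Rightarrow>
    ('b \<Rightarrow> 's \<Rightarrow> 'b \<Rightarrow> 'l) \<Rightarrow> ('b \<Rightarrow> 'l) \<Rightarrow> (nat \<Rightarrow> 'a \<Rightarrow> 'b \<Rightarrow> 'l) \<Rightarrow> bool" where
  "depth_bounded_fuzzy_bisim otimes \<delta> \<tau> \<delta>' \<tau>' \<Phi> \<longleftrightarrow>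
     (\<forall>n\<ge>1. \<Phi> n \<le> \<Phi> (n - 1)) \<and>
     rel_set_comp otimes (fconv (\<Phi> 0)) \<tau> \<le> \<tau>' \<and>
     rel_set_comp otimes (\<Phi> 0) \<tau>' \<le> \<tau> \<and>
     (\<forall>s. \<forall>n\<ge>1. rel_comp otimes (fconv (\<Phi> n)) (\<lambda>x y. \<delta> x s y)
                  \<le> rel_comp otimes (\<lambda>x y. \<delta>' x s y) (fconv (\<Phi> (n - 1)))) \<and>
     (\<forall>s. \<forall>n\<ge>1. rel_comp otimes (\<Phi> n) (\<lambda>x y. \<delta>' x s y)
                  \<le> rel_comp otimes (\<lambda>x y. \<delta> x s y) (\<Phi> (n - 1)))"

definition depth_bounded_norm_b :: "('l::complete_lattice \<Rightarrow> 'l \<Rightarrow> 'l) \<Rightarrow> ('l \<Rightarrow> 'l \<Rightarrow> 'l) \<Rightarrow>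
    ('a \<Rightarrow> 'l) \<Rightarrow> ('b \<Rightarrow> 'l) \<Rightarrow> (nat \<Rightarrow> 'a \<Rightarrow> 'b \<Rightarrow> 'l) \<Rightarrow> 'l" where
  "depth_bounded_norm_b otimes res \<sigma> \<sigma>' \<Phi> =
     inf (INF n. fnorm otimes res \<sigma> \<sigma>' (\<Phi> n)) (INF n. fnorm otimes res \<sigma>' \<sigma> (fconv (\<Phi> n)))"

end

theory Submission
  imports Defs
begin

lemma crl_adj: "complete_residuated_lattice otimes res \<Longrightarrow> otimes x y \<le> z \<longleftrightarrow> x \<le> res y z"
  by (simp add: complete_residuated_lattice_def)

lemma crl_comm: "complete_residuated_lattice otimes res \<Longrightarrow> otimes x y = otimes y x"
  by (simp add: complete_residuated_lattice_def)

lemma crl_mono1: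
  assumes "complete_residuated_lattice otimes res" "x \<le> x'"
  shows "otimes x y \<le> otimes x' y"
proof -
  have "x' \<le> res y (otimes x' y)" using crl_adj[OF assms(1)] by blast
  then have "x \<le> res y (otimes x' y)" using assms(2) by (rule order_trans[rotated])
  then show ?thesis using crl_adj[OF assms(1)] by blast
qed

lemma crl_mono2:
  assumes "complete_residuated_lattice otimes res" "y \<le> y'"
  shows "otimes x y \<le> otimes x y'"
  using crl_mono1[OF assms, of x] crl_comm[OF assms(1)] by simp

lemma crl_bot1:
  assumes "complete_residuated_lattice otimes res"
  shows "otimes bot y = bot"
proof -
  have "otimes bot y \<le> bot" using crl_adj[OF assms] by simp
  then show ?thesis using bot_unique by blast
qed

lemma res_INF:
  assumes "complete_residuated_lattice otimes res"
  shows "res y (INF i\<in>I. X i) = (INF i\<in>I. res y (X i))"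
proof -
  have "\<And>z. z \<le> res y (INF i\<in>I. X i) \<longleftrightarrow> z \<le> (INF i\<in>I. res y (X i))"
    by (simp add: crl_adj[OF assms, symmetric] le_INF_iff)
  then show ?thesis by (meson order.antisym order.refl)
qed

lemma jmd_range:
  assumes "join_meet_distributive TYPE('l::complete_lattice)"
  shows "sup (a::'l) (INF n. f n) = (INF n. sup a (f n))"
  using assms unfolding join_meet_distributive_def by (simp add: image_image)

lemma fin_inf_sup:
  fixes c :: "'c \<Rightarrow> nat \<Rightarrow> 'l::complete_lattice"
  assumes jmd: "join_meet_distributive TYPE('l)" and fin: "finite F"
    and dec: "\<And>i n. c i (Suc n) \<le> c i n"
  shows "(INF n. SUP i\<in>F. c i n) \<le> (SUP i\<in>F. INF n. c i n)"
  using fin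
proof (induction F rule: finite_induct)
  case empty
  then show ?case by simp
next
  case (insert j G)
  have anti: "n \<le> m \<Longrightarrow> c i m \<le> c i n" for i n m
    using lift_Suc_antimono_le[of "c i", OF dec] by blast
  define S where "S m = (SUP i\<in>G. c i m)" for m
  have Santi: "n \<le> m \<Longrightarrow> S m \<le> S n" for n m
    unfolding S_def by (rule SUP_mono) (use anti in blast)
  have "(INF n. sup (c j n) (S n)) \<le> (INF m. INF n. sup (S m) (c j n))"
  proof (intro INF_greatest)
    fix m n
    have "(INF k. sup (c j k) (S k)) \<le> sup (c j (max m n)) (S (max m n))"
      by (rule INF_lower) simp
    also have "\<dots> \<le> sup (S m) (c j n)"
      using anti[of n "max m n" j] Santi[of m "max m n"] by (simp add: le_supI1 le_supI2)
    finally show "(INF k. sup (c j k) (S k)) \<le> sup (S m) (c j n)" .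
  qed
  also have "\<dots> = (INF m. sup (S m) (INF n. c j n))"
    by (simp add: jmd_range[OF jmd])
  also have "\<dots> = (INF m. sup (INF n. c j n) (S m))"
    by (simp add: sup_commute)
  also have "\<dots> = sup (INF n. c j n) (INF m. S m)"
    by (simp add: jmd_range[OF jmd])
  also have "\<dots> \<le> sup (INF n. c j n) (SUP i\<in>G. INF n. c i n)"
    using insert.IH unfolding S_def by (rule sup_mono[OF order.refl])
  finally show ?case unfolding S_def by simp
qed

lemma SUP_supp:
  fixes f :: "'c \<Rightarrow> 'l::complete_lattice"
  assumes "\<And>y. y \<notin> F \<Longrightarrow> f y = bot"
  shows "(SUP y. f y) = (SUP y\<in>F. f y)"
proof (rule order.antisym)
  show "(SUP y. f y) \<le> (SUP y\<in>F. f y)"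
  proof (rule SUP_least)
    fix y show "f y \<le> (SUP y\<in>F. f y)"
      by (cases "y \<in> F") (auto intro: SUP_upper simp: assms)
  qed
  show "(SUP y\<in>F. f y) \<le> (SUP y. f y)" by (rule SUP_subset_mono) auto
qed

lemma key:
  fixes d :: "'c \<Rightarrow> 'l::complete_lattice"
  assumes crl: "complete_residuated_lattice otimes res"
    and jmd: "join_meet_distributive TYPE('l)"
    and cont: "otimes_continuous otimes"
    and fin: "finite {y. d y \<noteq> bot}"
    and dec: "\<And>n y. P (Suc n) y \<le> P n y"
  shows "(INF n. SUP y. otimes (d y) (P n y)) = (SUP y. otimes (d y) (INF n. P n y))"
proof (rule order.antisym)
  define F where "F = {y. d y \<noteq> bot}"
  have sup_eq: "(SUP y. otimes (d y) (Q y)) = (SUP y\<in>F. otimes (d y) (Q y))" for Q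
    by (rule SUP_supp) (simp add: F_def crl_bot1[OF crl])
  have "(INF n. SUP y. otimes (d y) (P n y)) = (INF n. SUP y\<in>F. otimes (d y) (P n y))"
    by (simp add: sup_eq)
  also have "\<dots> \<le> (SUP y\<in>F. INF n. otimes (d y) (P n y))"
    by (rule fin_inf_sup[OF jmd]) (use fin dec crl_mono2[OF crl] in \<open>auto simp: F_def\<close>)
  also have "\<dots> = (SUP y\<in>F. otimes (d y) (INF n. P n y))"
  proof -
    have "otimes x (INF n. P n y) = (INF n. otimes x (P n y))" for x y
    proof -
      have "range (\<lambda>n. P n y) \<noteq> {}" by simp
      then have "otimes x (Inf (range (\<lambda>n. P n y))) = (INF z\<in>range (\<lambda>n. P n y). otimes x z)"
        using cont unfolding otimes_continuous_def by blast
      then show ?thesis by (simp add: image_image)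
    qed
    then show ?thesis by simp
  qed
  also have "\<dots> = (SUP y. otimes (d y) (INF n. P n y))" by (simp add: sup_eq)
  finally show "(INF n. SUP y. otimes (d y) (P n y)) \<le> (SUP y. otimes (d y) (INF n. P n y))" .
  show "(SUP y. otimes (d y) (INF n. P n y)) \<le> (INF n. SUP y. otimes (d y) (P n y))"
    by (intro INF_greatest SUP_mono') (auto intro: crl_mono2[OF crl] INF_lower)
qed

lemma norm_eq:
  fixes d :: "'y \<Rightarrow> 'l::complete_lattice"
  assumes crl: "complete_residuated_lattice otimes res"
    and jmd: "join_meet_distributive TYPE('l)"
    and cont: "otimes_continuous otimes"
    and fin: "finite {y. d y \<noteq> bot}"
    and dec: "\<And>n x y. P (Suc n) x y \<le> P n x y"
  shows "(INF x. res (e x) (SUP y. otimes (d y) (INF n. P n x y)))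
       = (INF n. INF x. res (e x) (SUP y. otimes (d y) (P n x y)))"
proof -
  have "(INF x. res (e x) (SUP y. otimes (d y) (INF n. P n x y)))
      = (INF x. res (e x) (INF n. SUP y. otimes (d y) (P n x y)))"
    using key[OF crl jmd cont fin, of "\<lambda>n y. P n _ y"] dec by simp
  also have "\<dots> = (INF x. INF n. res (e x) (SUP y. otimes (d y) (P n x y)))"
    by (simp add: res_INF[OF crl])
  also have "\<dots> = (INF n. INF x. res (e x) (SUP y. otimes (d y) (P n x y)))"
    by (rule INF_commute)
  finally show ?thesis .
qed

theorem mainTheorem11:
  fixes otimes :: "'l::complete_lattice \<Rightarrow> 'l \<Rightarrow> 'l"
    and res :: "'l \<Rightarrow> 'l \<Rightarrow> 'l"
    and \<delta> :: "'a \<Rightarrow> 's \<Rightarrow> 'a \<Rightarrow> 'l" and \<sigma> \<tau> :: "'a \<Rightarrow> 'l"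
    and \<delta>' :: "'b \<Rightarrow> 's \<Rightarrow> 'b \<Rightarrow> 'l" and \<sigma>' \<tau>' :: "'b \<Rightarrow> 'l"
    and \<Phi> :: "nat \<Rightarrow> 'a \<Rightarrow> 'b \<Rightarrow> 'l"
  assumes "complete_residuated_lattice otimes res"
    and "join_meet_distributive TYPE('l)"
    and "otimes_continuous otimes"
    and "image_finite \<delta> \<sigma>" and "image_finite \<delta>' \<sigma>'"
    and "depth_bounded_fuzzy_bisim otimes \<delta> \<tau> \<delta>' \<tau>' \<Phi>"
  shows "fuzzy_bisim otimes \<delta> \<tau> \<delta>' \<tau>' (\<lambda>a b. INF n. \<Phi> n a b) \<and>
         fnorm_b otimes res \<sigma> \<sigma>' (\<lambda>a b. INF n. \<Phi> n a b) = depth_bounded_norm_b otimes res \<sigma> \<sigma>' \<Phi>"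
proof -
  note crl = assms(1) and jmd = assms(2) and cont = assms(3)
  note db = assms(6)[unfolded depth_bounded_fuzzy_bisim_def rel_comp_def rel_set_comp_def fconv_def]
  have D1: "\<forall>n\<ge>1. \<Phi> n \<le> \<Phi> (n - 1)" using db by blast
  have dec: "\<Phi> (Suc n) a b \<le> \<Phi> n a b" for n a b
  proof -
    have "\<Phi> (Suc n) \<le> \<Phi> n" using D1[rule_format, of "Suc n"] by simp
    then show ?thesis by (simp add: le_fun_def)
  qed
  have D2: "(\<lambda>b. SUP a. otimes (\<Phi> 0 a b) (\<tau> a)) \<le> \<tau>'" using db by blast
  have t0: "\<And>b. (SUP a. otimes (\<Phi> 0 a b) (\<tau> a)) \<le> \<tau>' b"
    using D2 by (simp add: le_fun_def)
  have D3: "(\<lambda>a. SUP b. otimes (\<Phi> 0 a b) (\<tau>' b)) \<le> \<tau>" using db by blast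
  have t0': "\<And>a. (SUP b. otimes (\<Phi> 0 a b) (\<tau>' b)) \<le> \<tau> a"
    using D3 by (simp add: le_fun_def)
  have D4: "\<forall>s. \<forall>n\<ge>1. (\<lambda>b x. SUP a. otimes (\<Phi> n a b) (\<delta> a s x))
      \<le> (\<lambda>b x. SUP b'. otimes (\<delta>' b s b') (\<Phi> (n - 1) x b'))" using db by blast
  have tr1: "(SUP a. otimes (\<Phi> (Suc n) a b) (\<delta> a s x)) \<le> (SUP b'. otimes (\<delta>' b s b') (\<Phi> n x b'))" for n s b x
    using mp[OF spec[OF spec[OF D4, of s], of "Suc n"]] by (simp add: le_fun_def)
  have D5: "\<forall>s. \<forall>n\<ge>1. (\<lambda>a y. SUP b. otimes (\<Phi> n a b) (\<delta>' b s y))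
      \<le> (\<lambda>a y. SUP a'. otimes (\<delta> a s a') (\<Phi> (n - 1) a' y))" using db by blast
  have tr2: "(SUP b. otimes (\<Phi> (Suc n) a b) (\<delta>' b s y)) \<le> (SUP a'. otimes (\<delta> a s a') (\<Phi> n a' y))" for n s a y
    using mp[OF spec[OF spec[OF D5, of s], of "Suc n"]] by (simp add: le_fun_def)
  have fin1: "finite {y. \<delta> x s y \<noteq> bot}" "finite {y. \<sigma> y \<noteq> bot}" for x s
    using assms(4) unfolding image_finite_def by auto
  have fin2: "finite {y. \<delta>' x s y \<noteq> bot}" "finite {y. \<sigma>' y \<noteq> bot}" for x s
    using assms(5) unfolding image_finite_def by auto
  define \<phi> where "\<phi> = (\<lambda>a b. INF n. \<Phi> n a b)"
  have phile: "\<phi> a b \<le> \<Phi> n a b" for n a b unfolding \<phi>_def by (rule INF_lower) simp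
  have B: "fuzzy_bisim otimes \<delta> \<tau> \<delta>' \<tau>' \<phi>"
    unfolding fuzzy_bisim_def rel_comp_def rel_set_comp_def fconv_def
  proof (intro conjI allI le_funI)
    fix b
    show "(SUP a. otimes (\<phi> a b) (\<tau> a)) \<le> \<tau>' b"
      by (rule order_trans[OF _ t0]) (intro SUP_mono' crl_mono1[OF crl] phile)
  next
    fix a
    show "(SUP b. otimes (\<phi> a b) (\<tau>' b)) \<le> \<tau> a"
      by (rule order_trans[OF _ t0']) (intro SUP_mono' crl_mono1[OF crl] phile)
  next
    fix s b x
    have "(SUP a. otimes (\<phi> a b) (\<delta> a s x)) \<le> (INF n. SUP b'. otimes (\<delta>' b s b') (\<Phi> n x b'))"
    proof (rule INF_greatest)
      fix n
      show "(SUP a. otimes (\<phi> a b) (\<delta> a s x)) \<le> (SUP b'. otimes (\<delta>' b s b') (\<Phi> n x b'))"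
        by (rule order_trans[OF _ tr1]) (intro SUP_mono' crl_mono1[OF crl] phile)
    qed
    also have "\<dots> = (SUP b'. otimes (\<delta>' b s b') (\<phi> x b'))"
      unfolding \<phi>_def by (rule key[OF crl jmd cont fin2(1)]) (rule dec)
    finally show "(SUP a. otimes (\<phi> a b) (\<delta> a s x)) \<le> (SUP b'. otimes (\<delta>' b s b') (\<phi> x b'))" .
  next
    fix s a y
    have "(SUP b. otimes (\<phi> a b) (\<delta>' b s y)) \<le> (INF n. SUP a'. otimes (\<delta> a s a') (\<Phi> n a' y))"
    proof (rule INF_greatest)
      fix n
      show "(SUP b. otimes (\<phi> a b) (\<delta>' b s y)) \<le> (SUP a'. otimes (\<delta> a s a') (\<Phi> n a' y))"
        by (rule order_trans[OF _ tr2]) (intro SUP_mono' crl_mono1[OF crl] phile)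
    qed
    also have "\<dots> = (SUP a'. otimes (\<delta> a s a') (\<phi> a' y))"
      unfolding \<phi>_def by (rule key[OF crl jmd cont fin1(1)]) (rule dec)
    finally show "(SUP b. otimes (\<phi> a b) (\<delta>' b s y)) \<le> (SUP a'. otimes (\<delta> a s a') (\<phi> a' y))" .
  qed
  have N1: "fnorm otimes res \<sigma> \<sigma>' \<phi> = (INF n. fnorm otimes res \<sigma> \<sigma>' (\<Phi> n))"
    unfolding fnorm_def subsethood_def set_rel_comp_def fconv_def \<phi>_def
    by (rule norm_eq[OF crl jmd cont fin2(2)]) (rule dec)
  have N2: "fnorm otimes res \<sigma>' \<sigma> (fconv \<phi>) = (INF n. fnorm otimes res \<sigma>' \<sigma> (fconv (\<Phi> n)))"
    unfolding fnorm_def subsethood_def set_rel_comp_def fconv_def \<phi>_def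
    by (rule norm_eq[OF crl jmd cont fin1(2), where P="\<lambda>n b a. \<Phi> n a b"]) (rule dec)
  show ?thesis
    using B N1 N2 unfolding \<phi>_def fnorm_b_def depth_bounded_norm_b_def by simp
qed

end
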